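(* Let $D\subseteq\mathbb{R}^n$ be nonempty, convex, closed and bounded, and let $f:\mathbb{R}^n\to\mathbb{R}$ be continuously differentiable. Consider Method (CGMI) (described in the context). Then: (i) the number of changes of the index $k$ at each stage $p$ is finite, so the sequence $\{w^p\}_{p\ge0}$ is infinite; (ii) the sequence $\{w^p\}$ has limit points, and all of them belong to $D^0$; (iii) if, in addition, $f$ is pseudo-convex on $D$, then all limit points of $\{w^p\}$ belong to $D^*$, and $\lim_{p\to\infty}f(w^p)=f^*$.
   Context: Notation: $f'(x)$ is the gradient of $f$; $\mathbb{Z}_+$ is the set of non-negative integers. The problem is $\min_{x\in D}f(x)$; $f^*=\inf_{x\in D}f(x)$ and $D^*$ is its solution set. $D^0$ is the set of $x^*\in D$ with $\langle f'(x^* ),x-x^*\rangle\ge0$ for all $x\in D$. $\mu(x)=\max_{y\in D}\langle f'(x),x-y\rangle$. A differentiable $\varphi$ is pseudo-convex on $D$ if for all $x,y\in D$, $\langle\varphi'(x),y-x\rangle\ge0$ implies $\varphi(y)\ge\varphi(x)$. Method (CGMI): Choose $w^0\in D$, $\beta\in(0,1)$, $\theta\in(0,1)$, and a positive sequence $\{\delta_p\}$ with $\delta_p\to0$. Set $p=1$. (Step 0) Set $k=0$, $x^0=w^{p-1}$. (Step 1) If $\mu(x^k)<\delta_p$, set $w^p=x^k$, replace $p$ by $p+1$ and go to Step 0 (restart). Otherwise choose any $z^k\in D$ with $\langle f'(x^k),x^k-z^k\rangle\ge\delta_p$. (Step 2) Set $d^k=z^k-x^k$, let $m$ be the smallest number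 in $\mathbb{Z}_+$ with $f(x^k+\theta^m d^k)\le f(x^k)+\beta\theta^m\langle f'(x^k),d^k\rangle$, set $\lambda_k=\theta^m$, $x^{k+1}=x^k+\lambda_k d^k$, $k=k+1$, and go to Step 1. The iterations with a fixed value of $p$ form stage $p$. *)

theory Defs
  imports "HOL-Analysis.Analysis"
begin

definition mu_gap :: "('a::euclidean_space \<Rightarrow> 'a) \<Rightarrow> 'a set \<Rightarrow> 'a \<Rightarrow> real" where
  "mu_gap f' D x = (SUP y\<in>D. f' x \<bullet> (x - y))"

definition stat_set :: "('a::euclidean_space \<Rightarrow> 'a) \<Rightarrow> 'a set \<Rightarrow> 'a set" where
  "stat_set f' D = {xs \<in> D. \<forall>y\<in>D. f' xs \<bullet> (y - xs) \<ge> 0}"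

definition opt_val :: "('a \<Rightarrow> real) \<Rightarrow> 'a set \<Rightarrow> real" where
  "opt_val f D = (INF x\<in>D. f x)"

definition sol_set :: "('a \<Rightarrow> real) \<Rightarrow> 'a set \<Rightarrow> 'a set" where
  "sol_set f D = {x \<in> D. f x = opt_val f D}"

definition pseudo_convex_on :: "('a::euclidean_space \<Rightarrow> real) \<Rightarrow> ('a \<Rightarrow> 'a) \<Rightarrow> 'a set \<Rightarrow> bool" where
  "pseudo_convex_on f f' D \<longleftrightarrow>
     (\<forall>x\<in>D. \<forall>y\<in>D. f' x \<bullet> (y - x) \<ge> 0 \<longrightarrow> f y \<ge> f x)"

definition armijo_ok :: "('a::euclidean_space \<Rightarrow> real) \<Rightarrow> ('a \<Rightarrow> 'a) \<Rightarrow> real \<Rightarrow> real \<Rightarrow> 'a \<Rightarrow> 'a \<Rightarrow> nat \<Rightarrow> bool" where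
  "armijo_ok f f' \<beta> \<theta> x z m \<longleftrightarrow>
     f (x + (\<theta> ^ m) *\<^sub>R (z - x)) \<le> f x + \<beta> * \<theta> ^ m * (f' x \<bullet> (z - x))"

definition armijo_step :: "('a::euclidean_space \<Rightarrow> real) \<Rightarrow> ('a \<Rightarrow> 'a) \<Rightarrow> real \<Rightarrow> real \<Rightarrow> 'a \<Rightarrow> 'a \<Rightarrow> 'a \<Rightarrow> bool" where
  "armijo_step f f' \<beta> \<theta> x z x' \<longleftrightarrow>
     (\<exists>m. armijo_ok f f' \<beta> \<theta> x z m \<and> (\<forall>m'<m. \<not> armijo_ok f f' \<beta> \<theta> x z m') \<and>
          x' = x + (\<theta> ^ m) *\<^sub>R (z - x))"

definition cgmi_iter :: "('a::euclidean_space \<Rightarrow> real) \<Rightarrow> ('a \<Rightarrow> 'a) \<Rightarrow> 'a set \<Rightarrow> real \<Rightarrow> real \<Rightarrow> real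
     \<Rightarrow> 'a \<Rightarrow> 'a \<Rightarrow> 'a \<Rightarrow> bool" where
  "cgmi_iter f f' D \<beta> \<theta> dl x z x' \<longleftrightarrow>
     \<not> mu_gap f' D x < dl \<and> z \<in> D \<and> f' x \<bullet> (x - z) \<ge> dl \<and> armijo_step f f' \<beta> \<theta> x z x'"

definition cgmi_stage :: "('a::euclidean_space \<Rightarrow> real) \<Rightarrow> ('a \<Rightarrow> 'a) \<Rightarrow> 'a set \<Rightarrow> real \<Rightarrow> real \<Rightarrow> real
     \<Rightarrow> 'a \<Rightarrow> 'a \<Rightarrow> bool" where
  "cgmi_stage f f' D \<beta> \<theta> dl w w' \<longleftrightarrow>
     (\<exists>K x z. x 0 = w \<and> (\<forall>k<K. cgmi_iter f f' D \<beta> \<theta> dl (x k) (z k) (x (Suc k))) \<and>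
              mu_gap f' D (x K) < dl \<and> w' = x K)"

definition cgmi_run :: "('a::euclidean_space \<Rightarrow> real) \<Rightarrow> ('a \<Rightarrow> 'a) \<Rightarrow> 'a set \<Rightarrow> real \<Rightarrow> real
     \<Rightarrow> (nat \<Rightarrow> real) \<Rightarrow> (nat \<Rightarrow> 'a) \<Rightarrow> bool" where
  "cgmi_run f f' D \<beta> \<theta> \<delta> w \<longleftrightarrow>
     w 0 \<in> D \<and> (\<forall>p. cgmi_stage f f' D \<beta> \<theta> (\<delta> (Suc p)) (w p) (w (Suc p)))"

definition is_limit_point :: "(nat \<Rightarrow> 'a::metric_space) \<Rightarrow> 'a \<Rightarrow> bool" where
  "is_limit_point w l \<longleftrightarrow> (\<exists>r. strict_mono r \<and> (w \<circ> r) \<longlonglongrightarrow> l)"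

end

theory Submission
  imports Defs
begin


locale cg =
  fixes D :: "'a::euclidean_space set" and f :: "'a \<Rightarrow> real" and f' :: "'a \<Rightarrow> 'a" and \<beta> \<theta> :: real
  assumes Dne: "D \<noteq> {}" and Dcvx: "convex D" and Dcl: "closed D" and Dbd: "bounded D"
    and deriv: "\<And>x. (f has_derivative (\<lambda>h. f' x \<bullet> h)) (at x)"
    and cont: "continuous_on UNIV f'"
    and beta: "0 < \<beta>" "\<beta> < 1"
    and theta: "0 < \<theta>" "\<theta> < 1"
begin

lemma Dcomp: "compact D" using Dcl Dbd compact_eq_bounded_closed by blast

lemma fcont: "continuous_on A f"
  by (meson continuous_at_imp_continuous_on deriv has_derivative_continuous)

lemma mu_props: "(\<forall>y\<in>D. f' x \<bullet> (x - y) \<le> mu_gap f' D x) \<and> (\<exists>y\<in>D. f' x \<bullet> (x - y) = mu_gap f' D x)"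
proof -
  have "continuous_on D (\<lambda>y. f' x \<bullet> (x - y))" by (intro continuous_intros)
  then obtain y0 where y0: "y0 \<in> D" "\<forall>y\<in>D. f' x \<bullet> (x - y) \<le> f' x \<bullet> (x - y0)"
    using continuous_attains_sup[OF Dcomp Dne] by blast
  have "mu_gap f' D x = f' x \<bullet> (x - y0)" unfolding mu_gap_def
    by (rule cSup_eq_maximum) (use y0 in auto)
  then show ?thesis using y0 by auto
qed

lemma seg_in_D: "x \<in> D \<Longrightarrow> z \<in> D \<Longrightarrow> 0 \<le> t \<Longrightarrow> t \<le> 1 \<Longrightarrow> x + t *\<^sub>R (z - x) \<in> D"
proof -
  assume a: "x \<in> D" "z \<in> D" "0 \<le> t" "t \<le> 1"
  have "(1 - t) *\<^sub>R x + t *\<^sub>R z \<in> D" using Dcvx a unfolding convex_def by auto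
  moreover have "(1 - t) *\<^sub>R x + t *\<^sub>R z = x + t *\<^sub>R (z - x)" by (simp add: algebra_simps)
  ultimately show ?thesis by simp
qed

lemma deriv_line: "((\<lambda>s. f (x + s *\<^sub>R d)) has_real_derivative (f' (x + s *\<^sub>R d) \<bullet> d)) (at s)"
proof -
  have "((\<lambda>s. x + s *\<^sub>R d) has_derivative (\<lambda>h. h *\<^sub>R d)) (at s)"
    by (auto intro!: derivative_eq_intros)
  from has_derivative_compose[OF this deriv]
  have "((\<lambda>s. f (x + s *\<^sub>R d)) has_derivative (\<lambda>h. f' (x + s *\<^sub>R d) \<bullet> (h *\<^sub>R d))) (at s)" .
  then show ?thesis unfolding has_field_derivative_def
    by (rule has_derivative_eq_rhs) (auto simp: mult.commute)
qed

lemma armijo_unif: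
  assumes "\<delta> > 0"
  shows "\<exists>\<eta>>0. \<forall>x\<in>D. \<forall>z\<in>D. f' x \<bullet> (x - z) \<ge> \<delta> \<longrightarrow>
           (\<forall>t. 0 < t \<and> t \<le> \<eta> \<longrightarrow> f (x + t *\<^sub>R (z - x)) \<le> f x + \<beta> * t * (f' x \<bullet> (z - x)))"
proof -
  obtain B0 where B0: "B0 > 0" "\<forall>x\<in>D. norm x \<le> B0" using Dbd bounded_pos by blast
  define B where "B = 2 * B0"
  have Bp: "B > 0" using B0 B_def by simp
  have Bd: "norm (z - x) \<le> B" if "x \<in> D" "z \<in> D" for x z
  proof -
    have "norm (z - x) \<le> norm z + norm x" by (rule norm_triangle_ineq4)
    moreover have "norm z \<le> B0" "norm x \<le> B0" using B0 that by auto
    ultimately show ?thesis using B_def by linarith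
  qed
  have uc: "uniformly_continuous_on D f'"
    by (rule compact_uniformly_continuous[OF continuous_on_subset[OF cont] Dcomp]) simp
  define \<epsilon> where "\<epsilon> = (1 - \<beta>) * \<delta> / B"
  have ep: "\<epsilon> > 0" using beta assms Bp by (simp add: \<epsilon>_def)
  obtain e where e: "e > 0" "\<forall>a\<in>D. \<forall>b\<in>D. dist b a < e \<longrightarrow> dist (f' b) (f' a) < \<epsilon>"
    using uc ep unfolding uniformly_continuous_on_def by metis
  define \<eta> where "\<eta> = min 1 (e / (2 * B))"
  have etap: "\<eta> > 0" using e Bp by (simp add: \<eta>_def)
  show ?thesis
  proof (intro exI[of _ \<eta>] conjI ballI impI allI etap)
    fix x z t assume x: "x \<in> D" and z: "z \<in> D" and dl: "\<delta> \<le> f' x \<bullet> (x - z)" and t: "0 < t \<and> t \<le> \<eta>"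
    define d where "d = z - x"
    have "\<exists>s. 0 < s \<and> s < t \<and> f (x + t *\<^sub>R d) - f (x + 0 *\<^sub>R d) = (t - 0) * (f' (x + s *\<^sub>R d) \<bullet> d)"
      by (rule MVT2) (use t deriv_line in auto)
    then obtain s where s: "0 < s" "s < t" and mv: "f (x + t *\<^sub>R d) - f x = t * (f' (x + s *\<^sub>R d) \<bullet> d)"
      by auto
    have t1: "t \<le> 1" using t by (simp add: \<eta>_def)
    have xi: "x + s *\<^sub>R d \<in> D" using seg_in_D[OF x z, of s] s t1 d_def by simp
    have nd: "norm d \<le> B" using Bd[OF x z] d_def by simp
    have "dist (x + s *\<^sub>R d) x = s * norm d" using s by (simp add: dist_norm)
    also have "\<dots> \<le> t * B" using s nd by (intro mult_mono) auto
    also have "\<dots> \<le> (e / (2 * B)) * B" using t Bp by (intro mult_right_mono) (auto simp: \<eta>_def)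
    also have "\<dots> < e" using e Bp by simp
    finally have "dist (f' (x + s *\<^sub>R d)) (f' x) < \<epsilon>" using e xi x by blast
    hence nn: "norm (f' (x + s *\<^sub>R d) - f' x) \<le> \<epsilon>" by (simp add: dist_norm)
    have "(f' (x + s *\<^sub>R d) - f' x) \<bullet> d \<le> norm (f' (x + s *\<^sub>R d) - f' x) * norm d"
      by (rule norm_cauchy_schwarz)
    also have "\<dots> \<le> \<epsilon> * B" using nn nd ep by (intro mult_mono) auto
    also have "\<dots> = (1 - \<beta>) * \<delta>" using Bp by (simp add: \<epsilon>_def)
    finally have c1: "(f' (x + s *\<^sub>R d) - f' x) \<bullet> d \<le> (1 - \<beta>) * \<delta>" .
    have fd: "f' x \<bullet> d \<le> - \<delta>" using dl d_def by (simp add: inner_diff_right)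
    have "(1 - \<beta>) * \<delta> \<le> (1 - \<beta>) * (- (f' x \<bullet> d))" using fd beta by (intro mult_left_mono) auto
    hence key: "f' (x + s *\<^sub>R d) \<bullet> d \<le> \<beta> * (f' x \<bullet> d)"
      using c1 by (simp add: inner_diff_left algebra_simps)
    have "f (x + t *\<^sub>R d) - f x \<le> t * (\<beta> * (f' x \<bullet> d))"
      unfolding mv using t key by (intro mult_left_mono) auto
    then show "f (x + t *\<^sub>R (z - x)) \<le> f x + \<beta> * t * (f' x \<bullet> (z - x))"
      by (simp add: d_def algebra_simps)
  qed
qed

end

context cg begin

lemma step_basic:
  assumes x: "x \<in> D" and z: "z \<in> D" and g: "f' x \<bullet> (x - z) \<ge> 0" and st: "armijo_step f f' \<beta> \<theta> x z x'"
  shows "x' \<in> D \<and> f x' \<le> f x"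
proof -
  obtain m where ok: "armijo_ok f f' \<beta> \<theta> x z m" and xe: "x' = x + (\<theta> ^ m) *\<^sub>R (z - x)"
    using st unfolding armijo_step_def by blast
  have tp: "0 < \<theta> ^ m" "\<theta> ^ m \<le> 1" using theta by (auto simp: power_le_one)
  have "x' \<in> D" using seg_in_D[OF x z] tp xe by simp
  moreover have "\<beta> * \<theta> ^ m * (f' x \<bullet> (z - x)) \<le> 0"
  proof -
    have "f' x \<bullet> (z - x) \<le> 0" using g by (simp add: inner_diff_right)
    moreover have "\<beta> * \<theta> ^ m \<ge> 0" using beta tp by simp
    ultimately show ?thesis by (simp add: mult_nonneg_nonpos)
  qed
  ultimately show ?thesis using ok xe unfolding armijo_ok_def by auto
qed

lemma step_dec:
  assumes "\<delta> > 0"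
  obtains c where "c > 0" "\<And>x z x'. x \<in> D \<Longrightarrow> z \<in> D \<Longrightarrow> f' x \<bullet> (x - z) \<ge> \<delta> \<Longrightarrow>
      armijo_step f f' \<beta> \<theta> x z x' \<Longrightarrow> f x' \<le> f x - c"
proof -
  obtain \<eta> where eta: "\<eta> > 0" and A: "\<forall>x\<in>D. \<forall>z\<in>D. f' x \<bullet> (x - z) \<ge> \<delta> \<longrightarrow>
           (\<forall>t. 0 < t \<and> t \<le> \<eta> \<longrightarrow> f (x + t *\<^sub>R (z - x)) \<le> f x + \<beta> * t * (f' x \<bullet> (z - x)))"
    using armijo_unif[OF assms] by blast
  define c where "c = \<beta> * min 1 (\<theta> * \<eta>) * \<delta>"
  have cp: "c > 0" using beta theta eta assms by (simp add: c_def)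
  show ?thesis
  proof (rule that[OF cp])
    fix x z x' assume x: "x \<in> D" and z: "z \<in> D" and dl: "f' x \<bullet> (x - z) \<ge> \<delta>"
      and st: "armijo_step f f' \<beta> \<theta> x z x'"
    obtain m where ok: "armijo_ok f f' \<beta> \<theta> x z m" and mn: "\<forall>m'<m. \<not> armijo_ok f f' \<beta> \<theta> x z m'"
      and xe: "x' = x + (\<theta> ^ m) *\<^sub>R (z - x)"
      using st unfolding armijo_step_def by blast
    have big: "\<theta> ^ m \<ge> min 1 (\<theta> * \<eta>)"
    proof (cases m)
      case 0 then show ?thesis by simp
    next
      case (Suc k)
      have "\<not> armijo_ok f f' \<beta> \<theta> x z k" using mn Suc by simp
      hence "\<not> (\<theta> ^ k \<le> \<eta>)" using A x z dl theta unfolding armijo_ok_def by auto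
      hence "\<theta> * \<eta> \<le> \<theta> * \<theta> ^ k" using theta by simp
      then show ?thesis using Suc by simp
    qed
    have fd: "f' x \<bullet> (z - x) \<le> - \<delta>" using dl by (simp add: inner_diff_right)
    have "\<beta> * \<theta> ^ m * (f' x \<bullet> (z - x)) \<le> \<beta> * \<theta> ^ m * (- \<delta>)"
      using fd beta theta by (intro mult_left_mono) auto
    also have "\<dots> \<le> - c" unfolding c_def using big beta assms
      by (simp add: mult_right_mono)
    finally show "f x' \<le> f x - c" using ok xe unfolding armijo_ok_def by simp
  qed
qed

lemma step_exists:
  assumes "\<delta> > 0" "x \<in> D" "z \<in> D" "f' x \<bullet> (x - z) \<ge> \<delta>"
  shows "\<exists>x'. armijo_step f f' \<beta> \<theta> x z x'"
proof -
  obtain \<eta> where eta: "\<eta> > 0" and A: "\<forall>x\<in>D. \<forall>z\<in>D. f' x \<bullet> (x - z) \<ge> \<delta> \<longrightarrow>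
           (\<forall>t. 0 < t \<and> t \<le> \<eta> \<longrightarrow> f (x + t *\<^sub>R (z - x)) \<le> f x + \<beta> * t * (f' x \<bullet> (z - x)))"
    using armijo_unif[OF assms(1)] by blast
  obtain n where "\<theta> ^ n < \<eta>" using real_arch_pow_inv[OF eta theta(2)] by blast
  moreover have "0 < \<theta> ^ n" using theta by simp
  ultimately have "f (x + (\<theta> ^ n) *\<^sub>R (z - x)) \<le> f x + \<beta> * \<theta> ^ n * (f' x \<bullet> (z - x))"
    using A assms(2-4) by auto
  hence ex: "\<exists>m. armijo_ok f f' \<beta> \<theta> x z m" unfolding armijo_ok_def by blast
  define m where "m = (LEAST m. armijo_ok f f' \<beta> \<theta> x z m)"
  have "armijo_ok f f' \<beta> \<theta> x z m" unfolding m_def by (rule LeastI_ex[OF ex])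
  moreover have "\<forall>m'<m. \<not> armijo_ok f f' \<beta> \<theta> x z m'" unfolding m_def using not_less_Least by blast
  ultimately show ?thesis unfolding armijo_step_def by blast
qed

lemma f_lower: "\<exists>L. \<forall>y\<in>D. L \<le> f y"
  using continuous_attains_inf[OF Dcomp Dne fcont] by blast

lemma stage_term:
  assumes dp: "\<delta> > 0" and x0: "x 0 \<in> D"
    and it: "\<forall>k. \<not> mu_gap f' D (x k) < \<delta> \<longrightarrow> cgmi_iter f f' D \<beta> \<theta> \<delta> (x k) (z k) (x (Suc k))"
  shows "\<exists>k. mu_gap f' D (x k) < \<delta>"
proof (rule ccontr)
  assume "\<not> ?thesis"
  hence all: "\<And>k. cgmi_iter f f' D \<beta> \<theta> \<delta> (x k) (z k) (x (Suc k))" using it by blast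
  obtain c where c: "c > 0" and dec: "\<And>x z x'. x \<in> D \<Longrightarrow> z \<in> D \<Longrightarrow> f' x \<bullet> (x - z) \<ge> \<delta> \<Longrightarrow>
      armijo_step f f' \<beta> \<theta> x z x' \<Longrightarrow> f x' \<le> f x - c"
    using step_dec[OF dp] by blast
  have "x k \<in> D \<and> f (x k) \<le> f (x 0) - real k * c" for k
  proof (induction k)
    case 0 then show ?case using x0 by simp
  next
    case (Suc k)
    have i: "z k \<in> D" "f' (x k) \<bullet> (x k - z k) \<ge> \<delta>" "armijo_step f f' \<beta> \<theta> (x k) (z k) (x (Suc k))"
      using all[of k] unfolding cgmi_iter_def by auto
    have "x (Suc k) \<in> D" using step_basic[OF _ i(1) _ i(3)] Suc i(2) dp by auto
    moreover have "f (x (Suc k)) \<le> f (x k) - c" using dec[OF _ i(1) i(2) i(3)] Suc by auto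
    ultimately show ?case using Suc by (simp add: algebra_simps)
  qed
  note * = this
  obtain L where L: "\<forall>y\<in>D. L \<le> f y" using f_lower by blast
  obtain k where "f (x 0) - L < real k * c" using ex_less_of_nat_mult[OF c] by blast
  have "L \<le> f (x 0) - real k * c" using *[of k] L by (meson order_trans)
  then show False using \<open>f (x 0) - L < real k * c\<close> by linarith
qed

lemma stage_props:
  assumes "w \<in> D" "\<delta> > 0" "cgmi_stage f f' D \<beta> \<theta> \<delta> w w'"
  shows "w' \<in> D \<and> f w' \<le> f w \<and> mu_gap f' D w' < \<delta>"
proof -
  obtain K x z where x0: "x 0 = w" and it: "\<forall>k<K. cgmi_iter f f' D \<beta> \<theta> \<delta> (x k) (z k) (x (Suc k))"
    and mu: "mu_gap f' D (x K) < \<delta>" and we: "w' = x K"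
    using assms(3) unfolding cgmi_stage_def by blast
  have "k \<le> K \<longrightarrow> x k \<in> D \<and> f (x k) \<le> f w" for k
  proof (induction k)
    case 0 then show ?case using x0 assms by simp
  next
    case (Suc k)
    show ?case
    proof
      assume "Suc k \<le> K"
      hence i: "z k \<in> D" "f' (x k) \<bullet> (x k - z k) \<ge> \<delta>" "armijo_step f f' \<beta> \<theta> (x k) (z k) (x (Suc k))"
        and h: "x k \<in> D \<and> f (x k) \<le> f w"
        using it Suc unfolding cgmi_iter_def by auto
      have "f' (x k) \<bullet> (x k - z k) \<ge> 0" using i(2) assms(2) by linarith
      from step_basic[OF _ i(1) this i(3)] h
      show "x (Suc k) \<in> D \<and> f (x (Suc k)) \<le> f w" by auto
    qed
  qed
  then show ?thesis using mu we by auto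
qed

lemma stage_exists:
  assumes dp: "\<delta> > 0" and w: "w \<in> D"
  shows "\<exists>w'. cgmi_stage f f' D \<beta> \<theta> \<delta> w w'"
proof -
  define P where "P x zx \<longleftrightarrow> fst zx \<in> D \<and> f' x \<bullet> (x - fst zx) \<ge> \<delta> \<and> armijo_step f f' \<beta> \<theta> x (fst zx) (snd zx)" for x zx
  define S where "S x = (if \<exists>zx. P x zx then SOME zx. P x zx else (x, x))" for x
  define X where "X k = ((\<lambda>x. snd (S x)) ^^ k) w" for k
  define Z where "Z k = fst (S (X k))" for k
  have XS: "X (Suc k) = snd (S (X k))" for k by (simp add: X_def)
  have PS: "P x (S x)" if "\<exists>zx. P x zx" for x
  proof -
    have "S x = (SOME zx. P x zx)" using that by (simp add: S_def)
    then show ?thesis using someI_ex[OF that] by simp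
  qed
  have inD: "X k \<in> D" for k
  proof (induction k)
    case 0 then show ?case using w by (simp add: X_def)
  next
    case (Suc k)
    show ?case
    proof (cases "\<exists>zx. P (X k) zx")
      case True
      have p: "P (X k) (S (X k))" using PS[OF True] .
      hence "fst (S (X k)) \<in> D" "f' (X k) \<bullet> (X k - fst (S (X k))) \<ge> 0"
        "armijo_step f f' \<beta> \<theta> (X k) (fst (S (X k))) (snd (S (X k)))"
        using dp unfolding P_def by auto
      from step_basic[OF Suc this] show ?thesis unfolding XS by simp
    next
      case False then show ?thesis using Suc by (simp add: XS S_def)
    qed
  qed
  have iter: "\<forall>k. \<not> mu_gap f' D (X k) < \<delta> \<longrightarrow> cgmi_iter f f' D \<beta> \<theta> \<delta> (X k) (Z k) (X (Suc k))"
  proof (intro allI impI)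
    fix k assume nm: "\<not> mu_gap f' D (X k) < \<delta>"
    obtain y where y: "y \<in> D" "f' (X k) \<bullet> (X k - y) = mu_gap f' D (X k)" using mu_props by blast
    hence yd: "f' (X k) \<bullet> (X k - y) \<ge> \<delta>" using nm by simp
    obtain x' where "armijo_step f f' \<beta> \<theta> (X k) y x'" using step_exists[OF dp inD y(1) yd] by blast
    hence "P (X k) (y, x')" using y yd by (simp add: P_def)
    hence "P (X k) (S (X k))" using PS by blast
    then have "Z k \<in> D" "f' (X k) \<bullet> (X k - Z k) \<ge> \<delta>" "armijo_step f f' \<beta> \<theta> (X k) (Z k) (X (Suc k))"
      unfolding P_def Z_def XS by auto
    then show "cgmi_iter f f' D \<beta> \<theta> \<delta> (X k) (Z k) (X (Suc k))"
      using nm unfolding cgmi_iter_def by blast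
  qed
  have X0: "X 0 = w" by (simp add: X_def)
  obtain k where k: "mu_gap f' D (X k) < \<delta>" using stage_term[OF dp _ iter] X0 w by auto
  define K where "K = (LEAST k. mu_gap f' D (X k) < \<delta>)"
  have K1: "mu_gap f' D (X K) < \<delta>" unfolding K_def by (rule LeastI[of _ k]) (rule k)
  have K2: "\<forall>j<K. cgmi_iter f f' D \<beta> \<theta> \<delta> (X j) (Z j) (X (Suc j))"
  proof (intro allI impI)
    fix j assume "j < K"
    hence "\<not> mu_gap f' D (X j) < \<delta>" unfolding K_def by (rule not_less_Least)
    then show "cgmi_iter f f' D \<beta> \<theta> \<delta> (X j) (Z j) (X (Suc j))" using iter by blast
  qed
  show ?thesis unfolding cgmi_stage_def
    by (rule exI[of _ "X K"], rule exI[of _ K], rule exI[of _ X], rule exI[of _ Z]) (use X0 K1 K2 in simp)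
qed

end

context cg begin

lemma run_exists:
  assumes dp: "\<And>p. \<delta> p > 0" and w0: "w0 \<in> D"
  shows "\<exists>w. w 0 = w0 \<and> cgmi_run f f' D \<beta> \<theta> \<delta> w"
proof -
  define Q where "Q p v v' \<longleftrightarrow> v' \<in> D \<and> cgmi_stage f f' D \<beta> \<theta> (\<delta> (Suc p)) v v'" for p v v'
  have ex: "\<exists>v'. Q p v v'" if vD: "v \<in> D" for p v
  proof -
    obtain v' where "cgmi_stage f f' D \<beta> \<theta> (\<delta> (Suc p)) v v'" using stage_exists[OF dp[of "Suc p"] vD] by blast
    moreover have "v' \<in> D" using stage_props[OF vD dp[of "Suc p"] calculation] by blast
    ultimately show ?thesis unfolding Q_def by blast
  qed
  define W where "W = rec_nat w0 (\<lambda>p v. SOME v'. Q p v v')"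
  have W0: "W 0 = w0" by (simp add: W_def)
  have WS: "W (Suc p) = (SOME v'. Q p (W p) v')" for p by (simp add: W_def)
  have "W p \<in> D \<and> Q p (W p) (W (Suc p))" for p
  proof (induction p)
    case 0
    have "Q 0 (W 0) (W (Suc 0))" unfolding WS using someI_ex[OF ex[OF w0[folded W0]]] .
    then show ?case using w0 W0 by simp
  next
    case (Suc p)
    have i: "W (Suc p) \<in> D" using Suc unfolding Q_def by blast
    have "Q (Suc p) (W (Suc p)) (W (Suc (Suc p)))" unfolding WS[of "Suc p"] using someI_ex[OF ex[OF i]] .
    then show ?case using i by simp
  qed
  hence "cgmi_run f f' D \<beta> \<theta> \<delta> W" unfolding cgmi_run_def Q_def using w0 W0 by auto
  then show ?thesis using W0 by blast
qed

lemma run_props: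
  assumes dp: "\<And>p. \<delta> p > 0" and r: "cgmi_run f f' D \<beta> \<theta> \<delta> w"
  shows "w p \<in> D \<and> f (w (Suc p)) \<le> f (w p) \<and> mu_gap f' D (w (Suc p)) < \<delta> (Suc p)"
proof (induction p)
  case 0
  have "w 0 \<in> D" using r unfolding cgmi_run_def by blast
  then show ?case using stage_props[OF _ dp[of "Suc _"], of "w 0"] r unfolding cgmi_run_def by blast
next
  case (Suc p)
  have "w (Suc p) \<in> D" using stage_props[OF _ dp[of "Suc _"], of "w p"] r Suc unfolding cgmi_run_def by blast
  then show ?case using stage_props[OF _ dp[of "Suc _"], of "w (Suc p)"] r unfolding cgmi_run_def by blast
qed

lemma run_limit_exists:
  assumes dp: "\<And>p. \<delta> p > 0" and r: "cgmi_run f f' D \<beta> \<theta> \<delta> w"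
  shows "\<exists>l. is_limit_point w l"
proof -
  have "\<forall>p. w p \<in> D" using run_props[OF dp r] by blast
  then obtain l rr where "strict_mono (rr :: nat \<Rightarrow> nat)" "(w \<circ> rr) \<longlonglongrightarrow> l"
    using seq_compactE[OF compact_imp_seq_compact[OF Dcomp]] by metis
  then show ?thesis unfolding is_limit_point_def by blast
qed

lemma run_limit_stat:
  assumes dp: "\<And>p. \<delta> p > 0" and d0: "\<delta> \<longlonglongrightarrow> 0" and r: "cgmi_run f f' D \<beta> \<theta> \<delta> w"
    and l: "is_limit_point w l"
  shows "l \<in> stat_set f' D"
proof -
  obtain rr where sm: "strict_mono rr" and lim: "(w \<circ> rr) \<longlonglongrightarrow> l" using l unfolding is_limit_point_def by blast
  have wD: "\<forall>p. w p \<in> D" using run_props[OF dp r] by blast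
  have lD: "l \<in> D" by (rule closed_sequentially[OF Dcl _ lim]) (use wD in simp)
  have "f' l \<bullet> (y - l) \<ge> 0" if y: "y \<in> D" for y
  proof -
    have ic: "isCont f' l" using cont by (simp add: continuous_on_eq_continuous_at)
    have t1: "(\<lambda>p. f' ((w \<circ> rr) p) \<bullet> ((w \<circ> rr) p - y)) \<longlonglongrightarrow> f' l \<bullet> (l - y)"
      by (intro tendsto_intros isCont_tendsto_compose[OF ic lim] lim)
    have t2: "(\<delta> \<circ> rr) \<longlonglongrightarrow> 0" by (rule LIMSEQ_subseq_LIMSEQ[OF d0 sm])
    have ev: "\<forall>\<^sub>F p in sequentially. f' ((w \<circ> rr) p) \<bullet> ((w \<circ> rr) p - y) \<le> (\<delta> \<circ> rr) p"
    proof (rule eventually_sequentiallyI[of 1])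
      fix p :: nat assume "1 \<le> p"
      hence "1 \<le> rr p" using seq_suble[OF sm, of p] by linarith
      then obtain q where q: "rr p = Suc q" by (cases "rr p") auto
      have "f' (w (Suc q)) \<bullet> (w (Suc q) - y) \<le> mu_gap f' D (w (Suc q))" using mu_props y by blast
      also have "\<dots> < \<delta> (Suc q)" using run_props[OF dp r] by blast
      finally show "f' ((w \<circ> rr) p) \<bullet> ((w \<circ> rr) p - y) \<le> (\<delta> \<circ> rr) p" using q by simp
    qed
    have "f' l \<bullet> (l - y) \<le> 0" using tendsto_le[OF trivial_limit_sequentially t2 t1 ev] .
    then show ?thesis by (simp add: inner_diff_right)
  qed
  then show ?thesis unfolding stat_set_def using lD by blast
qed

end


theorem theorem4p1:
  fixes D :: "(real ^ 'n) set" and f :: "real ^ 'n \<Rightarrow> real" and f' :: "real ^ 'n \<Rightarrow> real ^ 'n"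
    and \<beta> \<theta> :: real and \<delta> :: "nat \<Rightarrow> real"
  assumes D: "D \<noteq> {}" "convex D" "closed D" "bounded D"
    and deriv: "\<And>x. (f has_derivative (\<lambda>h. f' x \<bullet> h)) (at x)"
    and cont: "continuous_on UNIV f'"
    and beta: "0 < \<beta>" "\<beta> < 1"
    and theta: "0 < \<theta>" "\<theta> < 1"
    and delta: "\<And>p. \<delta> p > 0" "\<delta> \<longlonglongrightarrow> 0"
  shows
    \<comment> \<open>(i) every stage terminates after finitely many changes of k, and the sequence w is infinite\<close>
    "(\<forall>p\<ge>1. \<forall>w0\<in>D. \<forall>x z. x 0 = w0 \<and>
          (\<forall>k. \<not> mu_gap f' D (x k) < \<delta> p \<longrightarrow> cgmi_iter f f' D \<beta> \<theta> (\<delta> p) (x k) (z k) (x (Suc k)))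
          \<longrightarrow> (\<exists>k. mu_gap f' D (x k) < \<delta> p))
     \<and> (\<forall>w0\<in>D. \<exists>w. w 0 = w0 \<and> cgmi_run f f' D \<beta> \<theta> \<delta> w)
     \<comment> \<open>(ii) limit points exist and lie in D0\<close>
     \<and> (\<forall>w. cgmi_run f f' D \<beta> \<theta> \<delta> w \<longrightarrow>
          (\<exists>l. is_limit_point w l) \<and> (\<forall>l. is_limit_point w l \<longrightarrow> l \<in> stat_set f' D))
     \<comment> \<open>(iii) under pseudo-convexity, limit points lie in D* and f(w p) tends to f*\<close>
     \<and> (pseudo_convex_on f f' D \<longrightarrow>
          (\<forall>w. cgmi_run f f' D \<beta> \<theta> \<delta> w \<longrightarrow>
             (\<forall>l. is_limit_point w l \<longrightarrow> l \<in> sol_set f D) \<and>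
             (\<lambda>p. f (w p)) \<longlonglongrightarrow> opt_val f D))"
proof -
  have cgl: "cg D f f' \<beta> \<theta>" unfolding cg_def using D deriv cont beta theta by auto
  interpret cg D f f' \<beta> \<theta> by (rule cgl)
  have P1: "\<forall>p\<ge>1. \<forall>w0\<in>D. \<forall>x z. x 0 = w0 \<and>
          (\<forall>k. \<not> mu_gap f' D (x k) < \<delta> p \<longrightarrow> cgmi_iter f f' D \<beta> \<theta> (\<delta> p) (x k) (z k) (x (Suc k)))
          \<longrightarrow> (\<exists>k. mu_gap f' D (x k) < \<delta> p)"
  proof (intro allI impI ballI)
    fix p w0 x z assume "1 \<le> p" "w0 \<in> D" and h: "x 0 = w0 \<and>
          (\<forall>k. \<not> mu_gap f' D (x k) < \<delta> p \<longrightarrow> cgmi_iter f f' D \<beta> \<theta> (\<delta> p) (x k) (z k) (x (Suc k)))"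
    then show "\<exists>k. mu_gap f' D (x k) < \<delta> p" using stage_term[OF delta(1)[of p], of x z] by auto
  qed
  have P2: "\<forall>w0\<in>D. \<exists>w. w 0 = w0 \<and> cgmi_run f f' D \<beta> \<theta> \<delta> w"
    using run_exists[where \<delta>=\<delta>, OF delta(1)] by blast
  have P3: "\<forall>w. cgmi_run f f' D \<beta> \<theta> \<delta> w \<longrightarrow>
          (\<exists>l. is_limit_point w l) \<and> (\<forall>l. is_limit_point w l \<longrightarrow> l \<in> stat_set f' D)"
    using run_limit_exists[where \<delta>=\<delta>, OF delta(1)] run_limit_stat[where \<delta>=\<delta>, OF delta(1) delta(2)] by blast
  have P4: "pseudo_convex_on f f' D \<longrightarrow>
          (\<forall>w. cgmi_run f f' D \<beta> \<theta> \<delta> w \<longrightarrow>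
             (\<forall>l. is_limit_point w l \<longrightarrow> l \<in> sol_set f D) \<and>
             (\<lambda>p. f (w p)) \<longlonglongrightarrow> opt_val f D)"
  proof (intro impI allI)
    fix w assume pc: "pseudo_convex_on f f' D" and r: "cgmi_run f f' D \<beta> \<theta> \<delta> w"
    have sol: "l \<in> sol_set f D \<and> opt_val f D = f l" if l: "is_limit_point w l" for l
    proof -
      have ls: "l \<in> stat_set f' D" using run_limit_stat[where \<delta>=\<delta>, OF delta(1) delta(2) r l] .
      hence lD: "l \<in> D" and ge: "\<forall>y\<in>D. f y \<ge> f l"
        using pc unfolding stat_set_def pseudo_convex_on_def by auto
      have "opt_val f D = f l" unfolding opt_val_def
        by (rule cInf_eq_minimum) (use lD ge in auto)
      then show ?thesis using lD unfolding sol_set_def by simp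
    qed
    have rp: "\<And>p. w p \<in> D \<and> f (w (Suc p)) \<le> f (w p)" using run_props[where \<delta>=\<delta>, OF delta(1) r] by blast
    have dec: "decseq (\<lambda>p. f (w p))" using rp by (simp add: decseq_Suc_iff)
    obtain L where L: "\<forall>y\<in>D. L \<le> f y" using f_lower by blast
    have "\<forall>i. L \<le> f (w i)" using L rp by blast
    then obtain Lim where lim: "(\<lambda>p. f (w p)) \<longlonglongrightarrow> Lim" using decseq_convergent[OF dec] by metis
    obtain l where l: "is_limit_point w l" using run_limit_exists[where \<delta>=\<delta>, OF delta(1) r] by blast
    then obtain rr where sm: "strict_mono rr" and wl: "(w \<circ> rr) \<longlonglongrightarrow> l"
      unfolding is_limit_point_def by blast
    have ic: "isCont f l" using fcont[of UNIV] by (simp add: continuous_on_eq_continuous_at)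
    have t1: "(\<lambda>p. f ((w \<circ> rr) p)) \<longlonglongrightarrow> f l" by (rule isCont_tendsto_compose[OF ic wl])
    have t2: "(\<lambda>p. f (w (rr p))) \<longlonglongrightarrow> Lim" using LIMSEQ_subseq_LIMSEQ[OF lim sm] by (simp add: comp_def)
    have "Lim = f l" using LIMSEQ_unique[OF t2 t1[unfolded comp_def]] .
    hence "Lim = opt_val f D" using sol[OF l] by simp
    then show "(\<forall>l. is_limit_point w l \<longrightarrow> l \<in> sol_set f D) \<and> (\<lambda>p. f (w p)) \<longlonglongrightarrow> opt_val f D"
      using sol lim by auto
  qed
  show ?thesis using P1 P2 P3 P4 by blast
qed

end
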